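(* Let $\mathfrak g$ be a Lie algebra with scalar product $\langle\cdot,\cdot\rangle$ such that $\operatorname{ad}(X)^\top$ exists for every $X\in\mathfrak g$. Let $A:\mathfrak g\to\mathfrak g^*$, $A(X)=\langle X,\cdot\rangle$, be the inertia operator, $\mathfrak g^*_{\rm reg}=A(\mathfrak g)$ with the scalar product $\langle A(X),A(Y)\rangle:=\langle X,Y\rangle$, and let $\mathfrak g^*_{\rm reg}\rtimes\mathfrak g$ be the semidirect product for the coadjoint action $b=\operatorname{ad}^*$, where $(\operatorname{ad}^*(X)m)(Y)=-m([X,Y])$ (this action preserves $\mathfrak g^*_{\rm reg}$, since $\operatorname{ad}^*(X)A(Y)=-A(\operatorname{ad}(X)^\top Y)$), endowed with the scalar product $\langle m_1,m_2\rangle+\langle X_1,X_2\rangle$. Then for curves $u,v$ in $\mathfrak g$, the curve $(A(v),u)$ satisfies the Euler equation in $\mathfrak g^*_{\rm reg}\rtimes\mathfrak g$ (the geodesic equation for the right invariant metric on the magnetic extension $\mathfrak g^*_{\rm reg}\rtimes G$) if and only if $$\frac{d}{dt}u=-\operatorname{ad}(u)^\top u+\operatorname{ad}(v)^\top v,\qquad \frac{d}{dt}v=\operatorname{ad}(u)v.$$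
   Context: The semidirect product bracket is $[(m_1,X_1),(m_2,X_2)]=(\operatorname{ad}^*(X_1)m_2-\operatorname{ad}^*(X_2)m_1,[X_1,X_2])$. The Euler equation in a Lie algebra $\mathfrak k$ with scalar product is $\dot w=-\operatorname{ad}(w)^\top w$, $\operatorname{ad}(w)^\top$ being the adjoint of $[w,\cdot]$. *)

theory Defs
  imports "HOL-Analysis.Analysis"
begin

definition lie_algebra :: "('g::real_vector \<Rightarrow> 'g \<Rightarrow> 'g) \<Rightarrow> bool" where
  "lie_algebra br \<longleftrightarrow> bilinear br \<and> (\<forall>x y. br x y = - br y x) \<and>
     (\<forall>x y z. br x (br y z) + br y (br z x) + br z (br x y) = 0)"

definition has_adT :: "('g::real_inner \<Rightarrow> 'g \<Rightarrow> 'g) \<Rightarrow> bool" where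
  "has_adT br \<longleftrightarrow> (\<forall>X. \<exists>T. \<forall>Y Z. inner (br X Y) Z = inner Y (T Z))"

definition adT :: "('g::real_inner \<Rightarrow> 'g \<Rightarrow> 'g) \<Rightarrow> 'g \<Rightarrow> 'g \<Rightarrow> 'g" where
  "adT br X Z = (SOME w. \<forall>Y. inner (br X Y) Z = inner Y w)"

definition inertia :: "'g::real_inner \<Rightarrow> ('g \<Rightarrow> real)" where
  "inertia X = (\<lambda>Y. inner X Y)"

definition inertia_inv :: "('g::real_inner \<Rightarrow> real) \<Rightarrow> 'g" where
  "inertia_inv m = (THE X. inertia X = m)"

definition coad :: "('g \<Rightarrow> 'g \<Rightarrow> 'g) \<Rightarrow> 'g \<Rightarrow> ('g \<Rightarrow> real) \<Rightarrow> ('g \<Rightarrow> real)" where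
  "coad br X m = (\<lambda>Y. - m (br X Y))"

definition sd_br :: "('g \<Rightarrow> 'g \<Rightarrow> 'g) \<Rightarrow> ('g \<Rightarrow> real) \<times> 'g \<Rightarrow> ('g \<Rightarrow> real) \<times> 'g
    \<Rightarrow> ('g \<Rightarrow> real) \<times> 'g" where
  "sd_br br p q = (coad br (snd p) (fst q) - coad br (snd q) (fst p), br (snd p) (snd q))"

definition sd_inner :: "('g::real_inner \<Rightarrow> real) \<times> 'g \<Rightarrow> ('g \<Rightarrow> real) \<times> 'g \<Rightarrow> real" where
  "sd_inner p q = inner (inertia_inv (fst p)) (inertia_inv (fst q)) + inner (snd p) (snd q)"

definition sd_carrier :: "(('g::real_inner \<Rightarrow> real) \<times> 'g) set" where
  "sd_carrier = range inertia \<times> UNIV"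

text \<open>Euler equation  w' = - ad(w)^T w  in g*_reg \<rtimes> g. The element z = ad(w)^T w
 is characterised by <z,y> = <w,[w,y]> for all y in the carrier. The topology
 (hence the derivative) on g*_reg is the one of its scalar product, i.e. the one
 transported from g via A.\<close>
definition sd_euler :: "('g::real_inner \<Rightarrow> 'g \<Rightarrow> 'g) \<Rightarrow> (real \<Rightarrow> ('g \<Rightarrow> real) \<times> 'g) \<Rightarrow> bool" where
  "sd_euler br w \<longleftrightarrow> (\<forall>t. w t \<in> sd_carrier) \<and>
     (\<forall>t. \<exists>z \<in> sd_carrier.
        (\<forall>y \<in> sd_carrier. sd_inner z y = sd_inner (w t) (sd_br br (w t) y)) \<and>
        ((\<lambda>s. inertia_inv (fst (w s))) has_vector_derivative - inertia_inv (fst z)) (at t) \<and>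
        ((\<lambda>s. snd (w s)) has_vector_derivative - snd z) (at t))"

end

theory Submission
  imports Defs
begin

lemma inertia_inj: "inertia X = inertia Y \<Longrightarrow> X = (Y::'g::real_inner)"
proof -
  assume h: "inertia X = inertia Y"
  have "inner X (X - Y) = inner Y (X - Y)" using h unfolding inertia_def by metis
  hence "inner (X - Y) (X - Y) = 0" by (simp add: inner_diff_left)
  thus ?thesis by simp
qed

lemma inertia_inv_inertia[simp]: "inertia_inv (inertia X) = X"
  unfolding inertia_inv_def by (rule the_equality) (auto dest: inertia_inj)

lemma adT_prop:
  assumes "has_adT br"
  shows "inner (br X Y) Z = inner Y (adT br X Z)"
proof -
  obtain T where T: "\<forall>Y Z. inner (br X Y) Z = inner Y (T Z)" using assms unfolding has_adT_def by blast
  have "\<exists>w. \<forall>Y. inner (br X Y) Z = inner Y w" using T by blast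
  hence "\<forall>Y. inner (br X Y) Z = inner Y (adT br X Z)"
    unfolding adT_def by (rule someI_ex)
  thus ?thesis by blast
qed

lemma key:
  assumes la: "lie_algebra br" and ha: "has_adT br"
  shows "sd_inner (inertia v, u) (sd_br br (inertia v, u) (inertia Y, X)) =
    inner (- br u v) Y + inner (adT br u u - adT br v v) X"
proof -
  have anti: "\<And>x y. br x y = - br y x" using la unfolding lie_algebra_def by blast
  have fst: "fst (sd_br br (inertia v, u) (inertia Y, X)) = inertia (- adT br u Y + adT br X v)"
  proof -
    have "\<And>Z. coad br u (inertia Y) Z - coad br X (inertia v) Z = inner (- adT br u Y + adT br X v) Z"
    proof -
      fix Z
      have "coad br u (inertia Y) Z = - inner Z (adT br u Y)"
        unfolding coad_def inertia_def using adT_prop[OF ha, of u Z Y] by (simp add: inner_commute)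
      moreover have "coad br X (inertia v) Z = - inner Z (adT br X v)"
        unfolding coad_def inertia_def using adT_prop[OF ha, of X Z v] by (simp add: inner_commute)
      ultimately show "coad br u (inertia Y) Z - coad br X (inertia v) Z = inner (- adT br u Y + adT br X v) Z"
        by (metis inner_diff_left inner_commute minus_diff_eq diff_minus_eq_add uminus_add_conv_diff)
    qed
    thus ?thesis unfolding sd_br_def inertia_def by (auto simp: fun_eq_iff inertia_def)
  qed
  have snd: "snd (sd_br br (inertia v, u) (inertia Y, X)) = br u X" unfolding sd_br_def by simp
  have e1: "inner v (adT br u Y) = inner (br u v) Y" using adT_prop[OF ha, of u v Y] by (simp add: inner_commute)
  have e2: "inner v (adT br X v) = - inner X (adT br v v)"
    using adT_prop[OF ha, of X v v] adT_prop[OF ha, of v X v] anti[of X v] by simp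
  have e3: "inner u (br u X) = inner X (adT br u u)"
    using adT_prop[OF ha, of u X u] by (simp add: inner_commute)
  show ?thesis unfolding sd_inner_def using fst snd e1 e2 e3
    by (simp add: inner_diff_right inner_diff_left inner_commute[of X])
qed

lemma inner_eq_all: "(\<forall>Y. inner a Y = inner b Y) \<Longrightarrow> a = (b::'g::real_inner)"
proof -
  assume "\<forall>Y. inner a Y = inner b Y"
  hence "inner (a - b) (a - b) = 0" by (simp add: inner_diff_left)
  thus ?thesis by simp
qed

theorem proposition8p1:
  fixes br :: "'g::real_inner \<Rightarrow> 'g \<Rightarrow> 'g" and u v :: "real \<Rightarrow> 'g"
  assumes "lie_algebra br" and "has_adT br"
  shows "sd_euler br (\<lambda>t. (inertia (v t), u t)) \<longleftrightarrow>
    (\<forall>t. (u has_vector_derivative (- adT br (u t) (u t) + adT br (v t) (v t))) (at t) \<and>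
         (v has_vector_derivative br (u t) (v t)) (at t))"
proof -
  have carr: "\<And>p. p \<in> sd_carrier \<longleftrightarrow> (\<exists>a b. p = (inertia a, b))"
    unfolding sd_carrier_def by auto
  have zchar: "\<And>t a b. (\<forall>y \<in> sd_carrier. sd_inner (inertia a, b) y
       = sd_inner (inertia (v t), u t) (sd_br br (inertia (v t), u t) y)) \<longleftrightarrow>
      (a = - br (u t) (v t) \<and> b = adT br (u t) (u t) - adT br (v t) (v t))"
  proof -
    fix t a b
    have "(\<forall>y \<in> sd_carrier. sd_inner (inertia a, b) y
       = sd_inner (inertia (v t), u t) (sd_br br (inertia (v t), u t) y)) \<longleftrightarrow>
      (\<forall>Y X. inner a Y + inner b X = inner (- br (u t) (v t)) Y + inner (adT br (u t) (u t) - adT br (v t) (v t)) X)"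
    proof
      assume h: "\<forall>y \<in> sd_carrier. sd_inner (inertia a, b) y
       = sd_inner (inertia (v t), u t) (sd_br br (inertia (v t), u t) y)"
      show "\<forall>Y X. inner a Y + inner b X = inner (- br (u t) (v t)) Y + inner (adT br (u t) (u t) - adT br (v t) (v t)) X"
      proof (intro allI)
        fix Y X :: 'g
        have "(inertia Y, X) \<in> sd_carrier" using carr by blast
        thus "inner a Y + inner b X = inner (- br (u t) (v t)) Y + inner (adT br (u t) (u t) - adT br (v t) (v t)) X"
          using h[rule_format, of "(inertia Y, X)"] key[OF assms, of "v t" "u t" Y X] by (simp add: sd_inner_def)
      qed
    next
      assume h: "\<forall>Y X. inner a Y + inner b X = inner (- br (u t) (v t)) Y + inner (adT br (u t) (u t) - adT br (v t) (v t)) X"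
      show "\<forall>y \<in> sd_carrier. sd_inner (inertia a, b) y
       = sd_inner (inertia (v t), u t) (sd_br br (inertia (v t), u t) y)"
      proof
        fix y :: "('g \<Rightarrow> real) \<times> 'g" assume "y \<in> sd_carrier"
        then obtain Y X where y: "y = (inertia Y, X)" using carr by blast
        show "sd_inner (inertia a, b) y = sd_inner (inertia (v t), u t) (sd_br br (inertia (v t), u t) y)"
          using h key[OF assms, of "v t" "u t" Y X] y by (simp add: sd_inner_def)
      qed
    qed
    also have "\<dots> \<longleftrightarrow> (a = - br (u t) (v t) \<and> b = adT br (u t) (u t) - adT br (v t) (v t))"
    proof
      assume h: "\<forall>Y X. inner a Y + inner b X = inner (- br (u t) (v t)) Y + inner (adT br (u t) (u t) - adT br (v t) (v t)) X"
      have "\<forall>Y. inner a Y = inner (- br (u t) (v t)) Y" using h by (metis add.right_neutral inner_zero_right)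
      moreover have "\<forall>X. inner b X = inner (adT br (u t) (u t) - adT br (v t) (v t)) X" using h by (metis add.left_neutral inner_zero_right)
      ultimately show "a = - br (u t) (v t) \<and> b = adT br (u t) (u t) - adT br (v t) (v t)"
        using inner_eq_all by blast
    qed simp
    finally show "?thesis t a b" .
  qed
  show ?thesis
  proof
    assume h: "sd_euler br (\<lambda>t. (inertia (v t), u t))"
    show "\<forall>t. (u has_vector_derivative (- adT br (u t) (u t) + adT br (v t) (v t))) (at t) \<and>
         (v has_vector_derivative br (u t) (v t)) (at t)"
    proof
      fix t
      obtain z where z: "z \<in> sd_carrier"
        "\<forall>y \<in> sd_carrier. sd_inner z y = sd_inner (inertia (v t), u t) (sd_br br (inertia (v t), u t) y)"
        "((\<lambda>s. inertia_inv (fst (inertia (v s), u s))) has_vector_derivative - inertia_inv (fst z)) (at t)"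
        "((\<lambda>s. snd (inertia (v s), u s)) has_vector_derivative - snd z) (at t)"
        using h unfolding sd_euler_def by blast
      obtain a b where ab: "z = (inertia a, b)" using z(1) carr by blast
      have "a = - br (u t) (v t) \<and> b = adT br (u t) (u t) - adT br (v t) (v t)"
        using zchar z(2) ab by blast
      thus "(u has_vector_derivative (- adT br (u t) (u t) + adT br (v t) (v t))) (at t) \<and>
         (v has_vector_derivative br (u t) (v t)) (at t)"
        using z(3,4) ab by (simp add: fun_eq_iff[symmetric])
    qed
  next
    assume h: "\<forall>t. (u has_vector_derivative (- adT br (u t) (u t) + adT br (v t) (v t))) (at t) \<and>
         (v has_vector_derivative br (u t) (v t)) (at t)"
    show "sd_euler br (\<lambda>t. (inertia (v t), u t))"
      unfolding sd_euler_def
    proof (intro conjI allI)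
      fix t
      show "(inertia (v t), u t) \<in> sd_carrier" using carr by blast
      let ?z = "(inertia (- br (u t) (v t)), adT br (u t) (u t) - adT br (v t) (v t))"
      have "?z \<in> sd_carrier" using carr by blast
      moreover have "\<forall>y \<in> sd_carrier. sd_inner ?z y = sd_inner (inertia (v t), u t) (sd_br br (inertia (v t), u t) y)"
        using zchar by blast
      moreover have "((\<lambda>s. inertia_inv (fst (inertia (v s), u s))) has_vector_derivative - inertia_inv (fst ?z)) (at t)"
        using h by simp
      moreover have "((\<lambda>s. snd (inertia (v s), u s)) has_vector_derivative - snd ?z) (at t)"
        using h by simp
      ultimately show "\<exists>z \<in> sd_carrier.
        (\<forall>y \<in> sd_carrier. sd_inner z y = sd_inner (inertia (v t), u t) (sd_br br (inertia (v t), u t) y)) \<and>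
        ((\<lambda>s. inertia_inv (fst (inertia (v s), u s))) has_vector_derivative - inertia_inv (fst z)) (at t) \<and>
        ((\<lambda>s. snd (inertia (v s), u s)) has_vector_derivative - snd z) (at t)" by blast
    qed
  qed
qed

end
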